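(* Inner Nonlinear Markov Rewards (INMR), Inner Multi-Objective RL (IMORL) and Functions from Trajectories to Reals (FTR) are equally expressive: $\mathrm{INMR}\sim_{\mathrm{EXPR}}\mathrm{IMORL}\sim_{\mathrm{EXPR}}\mathrm{FTR}$. That is, for every environment $E$, $\mathrm{Ord}_{\mathrm{INMR}}(E)=\mathrm{Ord}_{\mathrm{IMORL}}(E)=\mathrm{Ord}_{\mathrm{FTR}}(E)$.
   Context: An environment is a tuple $E=(\mathcal S,\mathcal A,\mathcal T,\mathcal I)$ where $\mathcal S,\mathcal A$ are finite nonempty sets, $\mathcal T:\mathcal S\times\mathcal A\to\Delta(\mathcal S)$ and $\mathcal I\in\Delta(\mathcal S)$. A policy is a map $\pi:\mathcal S\to\Delta(\mathcal A)$ (stationary, possibly stochastic); $\Pi^E$ denotes the set of all policies. A trajectory is an infinite sequence $\xi=(s_0,a_0,s_1,a_1,\dots)\in\Xi:=\mathcal S\times(\mathcal A\times\mathcal S)^\omega$; under a policy $\pi$ it is generated by $s_0\sim\mathcal I$, $a_t\sim\pi(s_t)$, $s_{t+1}\sim\mathcal T(s_t,a_t)$, and $\mathbb E^\pi_\xi$, $\mathbb P^\pi$ denote expectation and probability under this distribution. An objective-specification formalism $X$ assigns to each environment $E$ a set of objective specifications, each of which induces a total preorder (transitive and strongly connected relation) $\succeq$ on $\Pi^E$; $\mathrm{Ord}_X(E)$ is the set of total preorders so induced. When a specification defines a scalar $J:\Pi^E\to\mathbb R$, it induces $\pi_1\succeq\pi_2\iff J(\pi_1)\ge J(\pi_2)$.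 We write $X\succeq_{\mathrm{EXPR}}Y$ iff $\mathrm{Ord}_Y(E)\subseteq\mathrm{Ord}_X(E)$ for every environment $E$, and $X\sim_{\mathrm{EXPR}}Y$ iff $X\succeq_{\mathrm{EXPR}}Y$ and $Y\succeq_{\mathrm{EXPR}}X$. For functions of trajectories below, functions are assumed Borel measurable (with the product topology on $\Xi$) and a specification is admissible only if all expectations appearing in its $J$ are well-defined and finite for every policy. INMR: a specification is $(\mathcal R,f,\gamma)$ with $\mathcal R:\mathcal S\times\mathcal A\times\mathcal S\to\mathbb R$, $f:\mathbb R\to\mathbb R$, $\gamma\in[0,1)$, and $J(\pi)=\mathbb E^\pi_\xi\big[f\big(\sum_{t=0}^\infty\gamma^t\mathcal R(s_t,a_t,s_{t+1})\big)\big]$. IMORL: a specification is $(k,\mathcal R,f,\gamma)$ with $k\in\mathbb N$, $\mathcal R:\mathcal S\times\mathcal A\times\mathcal S\to\mathbb R^k$ with components $\mathcal R_i$, $f:\mathbb R^k\to\mathbb R$, $\gamma\in[0,1)$, and $J(\pi)=\mathbb E^\pi_\xi[f(G_1(\xi),\dots,G_k(\xi))]$ where $G_i(\xi)=\sum_{t=0}^\infty\gamma^t\mathcal R_i(s_t,a_t,s_{t+1})$. FTR: a specification is $(f)$ with $f:\Xi\to\mathbb R$ and $J(\pi)=\mathbb E^\pi_\xi[f(\xi)]$. *)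

theory Defs
  imports "HOL-Probability.Probability"
begin

text \<open>
  Environment E = (S, A, T, I): the finite nonempty state/action sets are the
  types 's::finite and 'a::finite, the transition kernel is T :: 's => 'a => 's pmf,
  the initial distribution is I :: 's pmf.  A (stationary, stochastic) policy is any
  map 's => 'a pmf; the set of all policies is UNIV.

  A trajectory (s0,a0,s1,a1,...) is represented as the stream of pairs
  (s0,a0),(s1,a1),...; the measurable space of trajectories is the product
  sigma-algebra of the discrete spaces, i.e. the Borel sigma-algebra of the product
  topology (the space is second countable).
\<close>

abbreviation traj_space :: "('s \<times> 'a) stream measure" where
  "traj_space \<equiv> stream_space (count_space UNIV)"

fun prefix_cont :: "('s \<Rightarrow> 'a \<Rightarrow> 's pmf) \<Rightarrow> ('s \<Rightarrow> 'a pmf) \<Rightarrow> 's \<Rightarrow> 'a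
    \<Rightarrow> ('s \<times> 'a) list \<Rightarrow> real" where
  "prefix_cont T \<pi> s a [] = 1"
| "prefix_cont T \<pi> s a ((s', a') # xs) =
     pmf (T s a) s' * pmf (\<pi> s') a' * prefix_cont T \<pi> s' a' xs"

fun prefix_prob :: "('s \<Rightarrow> 'a \<Rightarrow> 's pmf) \<Rightarrow> 's pmf \<Rightarrow> ('s \<Rightarrow> 'a pmf)
    \<Rightarrow> ('s \<times> 'a) list \<Rightarrow> real" where
  "prefix_prob T I \<pi> [] = 1"
| "prefix_prob T I \<pi> ((s, a) # xs) = pmf I s * pmf (\<pi> s) a * prefix_cont T \<pi> s a xs"

text \<open>The trajectory distribution under policy pi: the (unique) measure on trajectory
  space whose cylinder probabilities are those of the process
  s0 ~ I, a_t ~ pi(s_t), s_(t+1) ~ T(s_t,a_t).\<close>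

definition is_traj_law :: "('s \<Rightarrow> 'a \<Rightarrow> 's pmf) \<Rightarrow> 's pmf \<Rightarrow> ('s \<Rightarrow> 'a pmf)
    \<Rightarrow> ('s \<times> 'a) stream measure \<Rightarrow> bool" where
  "is_traj_law T I \<pi> M \<longleftrightarrow>
     sets M = sets traj_space \<and>
     (\<forall>xs. emeasure M (sstart UNIV xs) = ennreal (prefix_prob T I \<pi> xs))"

definition traj_law :: "('s \<Rightarrow> 'a \<Rightarrow> 's pmf) \<Rightarrow> 's pmf \<Rightarrow> ('s \<Rightarrow> 'a pmf)
    \<Rightarrow> ('s \<times> 'a) stream measure" where
  "traj_law T I \<pi> = (THE M. is_traj_law T I \<pi> M)"

definition disc_return :: "real \<Rightarrow> ('s \<Rightarrow> 'a \<Rightarrow> 's \<Rightarrow> real) \<Rightarrow> ('s \<times> 'a) stream \<Rightarrow> real" where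
  "disc_return \<gamma> R \<xi> =
     (\<Sum>t. \<gamma> ^ t * R (fst (\<xi> !! t)) (snd (\<xi> !! t)) (fst (\<xi> !! Suc t)))"

definition ord_of :: "(('s \<Rightarrow> 'a pmf) \<Rightarrow> real) \<Rightarrow> (('s \<Rightarrow> 'a pmf) \<times> ('s \<Rightarrow> 'a pmf)) set" where
  "ord_of J = {(\<pi>1, \<pi>2). J \<pi>1 \<ge> J \<pi>2}"

definition Ord_INMR :: "('s \<Rightarrow> 'a \<Rightarrow> 's pmf) \<Rightarrow> 's pmf
    \<Rightarrow> (('s \<Rightarrow> 'a pmf) \<times> ('s \<Rightarrow> 'a pmf)) set set" where
  "Ord_INMR T I =
    {ord_of (\<lambda>\<pi>. \<integral>\<xi>. f (disc_return \<gamma> R \<xi>) \<partial>traj_law T I \<pi>) | R f \<gamma>.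
       0 \<le> \<gamma> \<and> \<gamma> < 1 \<and> f \<in> borel_measurable borel \<and>
       (\<forall>\<pi>. integrable (traj_law T I \<pi>) (\<lambda>\<xi>. f (disc_return \<gamma> R \<xi>)))}"

definition Ord_IMORL :: "('s \<Rightarrow> 'a \<Rightarrow> 's pmf) \<Rightarrow> 's pmf
    \<Rightarrow> (('s \<Rightarrow> 'a pmf) \<times> ('s \<Rightarrow> 'a pmf)) set set" where
  "Ord_IMORL T I =
    {ord_of (\<lambda>\<pi>. \<integral>\<xi>. f (\<lambda>i\<in>{..<k}. disc_return \<gamma> (R i) \<xi>) \<partial>traj_law T I \<pi>)
       | (k::nat) (R :: nat \<Rightarrow> 's \<Rightarrow> 'a \<Rightarrow> 's \<Rightarrow> real) f \<gamma>.
       0 \<le> \<gamma> \<and> \<gamma> < 1 \<and> f \<in> borel_measurable (\<Pi>\<^sub>M i\<in>{..<k}. (borel :: real measure)) \<and>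
       (\<forall>\<pi>. integrable (traj_law T I \<pi>)
              (\<lambda>\<xi>. f (\<lambda>i\<in>{..<k}. disc_return \<gamma> (R i) \<xi>)))}"

definition Ord_FTR :: "('s \<Rightarrow> 'a \<Rightarrow> 's pmf) \<Rightarrow> 's pmf
    \<Rightarrow> (('s \<Rightarrow> 'a pmf) \<times> ('s \<Rightarrow> 'a pmf)) set set" where
  "Ord_FTR T I =
    {ord_of (\<lambda>\<pi>. \<integral>\<xi>. f \<xi> \<partial>traj_law T I \<pi>) | f.
       f \<in> borel_measurable traj_space \<and> (\<forall>\<pi>. integrable (traj_law T I \<pi>) f)}"

end

theory Submission
  imports Defs
begin

lemma summable_geom_bounded:
  fixes d :: "nat \<Rightarrow> real"
  assumes "0 \<le> g" "g < 1" "\<And>t. \<bar>d t\<bar> \<le> M"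
  shows "summable (\<lambda>t. g ^ t * d t)"
proof (rule summable_comparison_test')
  show "summable (\<lambda>t. M * g ^ t)" using assms by (intro summable_mult summable_geometric) auto
  fix n :: nat
  show "norm (g ^ n * d n) \<le> M * g ^ n"
  proof -
    have "\<bar>d n\<bar> * g ^ n \<le> M * g ^ n" using assms by (intro mult_right_mono) auto
    then show ?thesis using assms by (simp add: abs_mult mult.commute)
  qed
qed

fun Pf :: "(nat \<Rightarrow> nat) \<Rightarrow> int \<Rightarrow> nat \<Rightarrow> int" where
  "Pf d B 0 = int (d 0)"
| "Pf d B (Suc n) = B * Pf d B n + int (d (Suc n))"

lemma digit_step:
  fixes d :: "nat \<Rightarrow> nat" and c :: nat
  assumes dc: "\<And>t. d t < c"
  defines "b \<equiv> real c + 1"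
  shows "b ^ n * (\<Sum>t. (1/b) ^ t * real (d t)) =
           real_of_int (Pf d (int c + 1) n) + (\<Sum>t. (1/b) ^ Suc t * real (d (t + n + 1)))"
proof -
  have b1: "b > 1" using dc[of 0] unfolding b_def by simp
  have sm: "\<And>k. summable (\<lambda>t. (1/b) ^ t * real (d (t + k)))"
    by (rule summable_geom_bounded[where M="real c"]) (use b1 dc less_imp_le in auto)
  have sm': "\<And>k. summable (\<lambda>t. (1/b) ^ Suc t * real (d (t + k)))"
    using sm by (simp add: summable_mult mult.assoc)
  have split: "\<And>k. (\<Sum>t. (1/b) ^ t * real (d (t + k))) = real (d k) + (\<Sum>t. (1/b) ^ Suc t * real (d (t + k + 1)))"
  proof -
    fix k
    have "(\<Sum>t. (1/b) ^ Suc t * real (d (Suc t + k))) = (\<Sum>t. (1/b) ^ t * real (d (t + k))) - real (d k)"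
      using suminf_split_head[OF sm[of k]] by simp
    then show "(\<Sum>t. (1/b) ^ t * real (d (t + k))) = real (d k) + (\<Sum>t. (1/b) ^ Suc t * real (d (t + k + 1)))"
      by simp
  qed
  show ?thesis
  proof (induction n)
    case 0
    show ?case using split[of 0] by simp
  next
    case (Suc n)
    have "b * (\<Sum>t. (1/b) ^ Suc t * real (d (t + n + 1))) = (\<Sum>t. b * ((1/b) ^ Suc t * real (d (t + (n + 1)))))"
      using suminf_mult[OF sm'[of "n+1"], of b] by (simp add: add.assoc)
    also have "\<dots> = (\<Sum>t. (1/b) ^ t * real (d (t + (n + 1))))"
      using b1 by simp
    also have "\<dots> = real (d (Suc n)) + (\<Sum>t. (1/b) ^ Suc t * real (d (t + Suc n + 1)))"
      using split[of "n+1"] by simp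
    finally have e: "b * (\<Sum>t. (1/b) ^ Suc t * real (d (t + n + 1))) = real (d (Suc n)) + (\<Sum>t. (1/b) ^ Suc t * real (d (t + Suc n + 1)))" .
    have "b ^ Suc n * (\<Sum>t. (1/b) ^ t * real (d t)) = b * (b ^ n * (\<Sum>t. (1/b) ^ t * real (d t)))" by simp
    also have "\<dots> = b * real_of_int (Pf d (int c + 1) n) + b * (\<Sum>t. (1/b) ^ Suc t * real (d (t + n + 1)))"
      using Suc by (simp add: distrib_left)
    also have "\<dots> = real_of_int (Pf d (int c + 1) (Suc n)) + (\<Sum>t. (1/b) ^ Suc t * real (d (t + Suc n + 1)))"
      using e by (simp add: b_def)
    finally show ?case .
  qed
qed

lemma digit_extract:
  fixes d :: "nat \<Rightarrow> nat" and c :: nat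
  assumes dc: "\<And>t. d t < c"
  defines "b \<equiv> real c + 1"
  shows "\<lfloor>b ^ n * (\<Sum>t. (1/b) ^ t * real (d t))\<rfloor> mod (int c + 1) = int (d n)"
proof -
  have b1: "b > 1" using dc[of 0] unfolding b_def by simp
  define S where "S = (\<Sum>t. (1/b) ^ Suc t * real (d (t + n + 1)))"
  have sm0: "summable (\<lambda>t. (1/b) ^ t * real (d (t + n + 1)))"
    by (rule summable_geom_bounded[where M="real c" and d="\<lambda>t. real (d (t + n + 1))"]) (use b1 dc less_imp_le in auto)
  have sm: "summable (\<lambda>t. (1/b) ^ Suc t * real (d (t + n + 1)))"
    using summable_mult[OF sm0, of "1/b"] by (simp add: mult.assoc)
  have S0: "0 \<le> S" unfolding S_def using b1 by (intro suminf_nonneg[OF sm]) auto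
  have smg: "summable (\<lambda>t. (1/b) ^ Suc t * (real c - 1))"
    using b1 by (intro summable_mult2) (simp add: summable_mult)
  have "S \<le> (\<Sum>t. (1/b) ^ Suc t * (real c - 1))" unfolding S_def
  proof (rule suminf_le[OF _ sm smg])
    fix t
    have "real (d (t + n + 1)) \<le> real c - 1" using dc[of "t+n+1"] by linarith
    then show "(1/b) ^ Suc t * real (d (t + n + 1)) \<le> (1/b) ^ Suc t * (real c - 1)"
      using b1 by (intro mult_left_mono) auto
  qed
  also have "\<dots> = (\<Sum>t. (1/b) ^ t * ((1/b) * (real c - 1)))"
    by (simp add: mult.assoc)
  also have "\<dots> = (\<Sum>t. (1/b) ^ t) * ((1/b) * (real c - 1))"
    by (rule suminf_mult2[symmetric], rule summable_geometric) (use b1 in auto)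
  also have "\<dots> = (real c - 1) / real c"
  proof -
    have c0: "real c > 0" using dc[of 0] by simp
    have "(\<Sum>t. (1/b) ^ t) = b / real c" using b1
      by (subst suminf_geometric) (auto simp: b_def field_simps)
    then show ?thesis using c0 b1 by (simp add: field_simps)
  qed
  also have "\<dots> < 1" using dc[of 0] by simp
  finally have S1: "S < 1" .
  have "\<lfloor>b ^ n * (\<Sum>t. (1/b) ^ t * real (d t))\<rfloor> = Pf d (int c + 1) n"
  proof -
    have eq: "b ^ n * (\<Sum>t. (1/b) ^ t * real (d t)) = real_of_int (Pf d (int c + 1) n) + S"
      unfolding S_def b_def by (rule digit_step[OF dc])
    show ?thesis unfolding eq using S0 S1 by (intro floor_unique) auto
  qed
  moreover have "Pf d (int c + 1) n mod (int c + 1) = int (d n)"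
  proof -
    have "int (d n) mod (int c + 1) = int (d n)" using dc[of n] by (intro mod_pos_pos_trivial) auto
    then show ?thesis by (cases n) auto
  qed
  ultimately show ?thesis by simp
qed
lemma disc_return_meas:
  "(\<lambda>\<xi>. disc_return \<gamma> R \<xi>) \<in> borel_measurable (stream_space (count_space UNIV) :: ('s::countable \<times> 'a::countable) stream measure)"
  unfolding disc_return_def
proof (rule borel_measurable_suminf)
  fix t
  have p: "(\<lambda>\<xi>::('s \<times> 'a) stream. (\<xi> !! t, \<xi> !! Suc t)) \<in> measurable (stream_space (count_space UNIV)) (count_space UNIV)"
  proof -
    have "(\<lambda>\<xi>::('s \<times> 'a) stream. (\<xi> !! t, \<xi> !! Suc t)) \<in> measurable (stream_space (count_space UNIV)) (count_space UNIV \<Otimes>\<^sub>M count_space UNIV)"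
      by (intro measurable_Pair measurable_snth)
    then show ?thesis by (simp add: pair_measure_countable)
  qed
  have "(\<lambda>\<xi>::('s \<times> 'a) stream. (\<lambda>p. \<gamma> ^ t * R (fst (fst p)) (snd (fst p)) (fst (snd p))) (\<xi> !! t, \<xi> !! Suc t)) \<in> borel_measurable (stream_space (count_space UNIV))"
    using measurable_compose[OF p measurable_count_space[where f="\<lambda>p. \<gamma> ^ t * R (fst (fst p)) (snd (fst p)) (fst (snd p))"]] by simp
  then show "(\<lambda>\<xi>::('s \<times> 'a) stream. \<gamma> ^ t * R (fst (\<xi> !! t)) (snd (\<xi> !! t)) (fst (\<xi> !! Suc t))) \<in> borel_measurable (stream_space (count_space UNIV))"
    by simp
qed

lemma inmr_imorl:
  fixes T :: "'s::finite \<Rightarrow> 'a::finite \<Rightarrow> 's pmf" and I :: "'s pmf"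
  shows "Ord_INMR T I \<subseteq> Ord_IMORL T I"
proof
  fix x assume "x \<in> Ord_INMR T I"
  then obtain R f \<gamma> where x: "x = ord_of (\<lambda>\<pi>. \<integral>\<xi>. f (disc_return \<gamma> R \<xi>) \<partial>traj_law T I \<pi>)"
    and h: "0 \<le> \<gamma>" "\<gamma> < 1" "f \<in> borel_measurable borel"
      "\<forall>\<pi>. integrable (traj_law T I \<pi>) (\<lambda>\<xi>. f (disc_return \<gamma> R \<xi>))"
    unfolding Ord_INMR_def by blast
  define f' where "f' = (\<lambda>v::nat \<Rightarrow> real. f (v 0))"
  have eq: "(\<lambda>\<xi>. f' (\<lambda>i\<in>{..<1::nat}. disc_return \<gamma> ((\<lambda>i. R) i) \<xi>)) = (\<lambda>\<xi>. f (disc_return \<gamma> R \<xi>))"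
    by (simp add: f'_def)
  have m: "f' \<in> borel_measurable (\<Pi>\<^sub>M i\<in>{..<1::nat}. (borel :: real measure))"
    unfolding f'_def using h(3) by measurable
  show "x \<in> Ord_IMORL T I"
    unfolding Ord_IMORL_def mem_Collect_eq
    apply (rule exI[of _ 1], rule exI[of _ "\<lambda>i. R"], rule exI[of _ f'], rule exI[of _ \<gamma>])
    unfolding eq x using h m by simp
qed

lemma imorl_ftr:
  fixes T :: "'s::finite \<Rightarrow> 'a::finite \<Rightarrow> 's pmf" and I :: "'s pmf"
  shows "Ord_IMORL T I \<subseteq> Ord_FTR T I"
proof
  fix x assume "x \<in> Ord_IMORL T I"
  then obtain k R f \<gamma> where x: "x = ord_of (\<lambda>\<pi>. \<integral>\<xi>. f (\<lambda>i\<in>{..<k}. disc_return \<gamma> (R i) \<xi>) \<partial>traj_law T I \<pi>)"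
    and h: "f \<in> borel_measurable (\<Pi>\<^sub>M i\<in>{..<k::nat}. (borel :: real measure))"
      "\<forall>\<pi>. integrable (traj_law T I \<pi>) (\<lambda>\<xi>. f (\<lambda>i\<in>{..<k}. disc_return \<gamma> (R i) \<xi>))"
    unfolding Ord_IMORL_def by blast
  have m: "(\<lambda>\<xi>. f (\<lambda>i\<in>{..<k}. disc_return \<gamma> (R i) \<xi>)) \<in> borel_measurable (stream_space (count_space UNIV) :: ('s \<times> 'a) stream measure)"
    by (rule measurable_compose[OF measurable_restrict[OF disc_return_meas] h(1)])
  show "x \<in> Ord_FTR T I"
    unfolding Ord_FTR_def mem_Collect_eq
    apply (rule exI[of _ "\<lambda>\<xi>. f (\<lambda>i\<in>{..<k}. disc_return \<gamma> (R i) \<xi>)"])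
    unfolding x using h m by simp
qed

lemma ftr_inmr:
  fixes T :: "'s::finite \<Rightarrow> 'a::finite \<Rightarrow> 's pmf" and I :: "'s pmf"
  shows "Ord_FTR T I \<subseteq> Ord_INMR T I"
proof
  fix x assume "x \<in> Ord_FTR T I"
  then obtain f where x: "x = ord_of (\<lambda>\<pi>. \<integral>\<xi>. f \<xi> \<partial>traj_law T I \<pi>)"
    and h: "f \<in> borel_measurable (stream_space (count_space UNIV) :: ('s \<times> 'a) stream measure)"
      "\<forall>\<pi>. integrable (traj_law T I \<pi>) f"
    unfolding Ord_FTR_def by blast
  define c where "c = card (UNIV :: ('s \<times> 'a) set)"
  obtain e :: "'s \<times> 'a \<Rightarrow> nat" where e: "bij_betw e UNIV {0..<c}"
    using ex_bij_betw_finite_nat[of "UNIV :: ('s \<times> 'a) set"] unfolding c_def by auto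
  have einj: "inj e" using e bij_betw_def by blast
  have elt: "\<And>p. e p < c" using e bij_betwE by fastforce
  define b where "b = real c + 1"
  define \<gamma> where "\<gamma> = 1 / b"
  define R where "R = (\<lambda>(s::'s) (a::'a) (s'::'s). real (e (s, a)))"
  define dec where "dec = (\<lambda>x::real. smap (\<lambda>n. inv e (nat (\<lfloor>b ^ n * x\<rfloor> mod (int c + 1)))) nats)"
  define g where "g = (\<lambda>x. f (dec x))"
  have b1: "b > 1" using elt[of undefined] unfolding b_def by simp
  have key: "\<And>\<xi>. dec (disc_return \<gamma> R \<xi>) = \<xi>"
  proof -
    fix \<xi> :: "('s \<times> 'a) stream"
    have dr: "disc_return \<gamma> R \<xi> = (\<Sum>t. (1/b) ^ t * real (e (\<xi> !! t)))"
      unfolding disc_return_def R_def \<gamma>_def by simp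
    have "\<And>n. inv e (nat (\<lfloor>b ^ n * disc_return \<gamma> R \<xi>\<rfloor> mod (int c + 1))) = \<xi> !! n"
      unfolding dr b_def using digit_extract[of "\<lambda>t. e (\<xi> !! t)" c] elt einj by simp
    then have "(\<lambda>n. inv e (nat (\<lfloor>b ^ n * disc_return \<gamma> R \<xi>\<rfloor> mod (int c + 1)))) = snth \<xi>"
      by (rule ext)
    then show "dec (disc_return \<gamma> R \<xi>) = \<xi>"
      unfolding dec_def by (simp only: stream_smap_nats[symmetric])
  qed
  have eq: "(\<lambda>\<xi>. g (disc_return \<gamma> R \<xi>)) = f" unfolding g_def key by simp
  have dm: "dec \<in> measurable borel (stream_space (count_space UNIV))"
    unfolding dec_def
  proof (rule measurable_stream_space2)
    fix n
    have "(\<lambda>x::real. \<lfloor>b ^ n * x\<rfloor>) \<in> measurable borel (count_space UNIV)" by measurable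
    then have "(\<lambda>x::real. (\<lambda>z. inv e (nat (z mod (int c + 1)))) \<lfloor>b ^ n * x\<rfloor>) \<in> measurable borel (count_space UNIV)"
      by (rule measurable_compose[OF _ measurable_count_space[where f="\<lambda>z. inv e (nat (z mod (int c + 1)))"]])
    then show "(\<lambda>x::real. smap (\<lambda>n. inv e (nat (\<lfloor>b ^ n * x\<rfloor> mod (int c + 1)))) nats !! n) \<in> measurable borel (count_space UNIV)"
      by simp
  qed
  have gm: "g \<in> borel_measurable borel" unfolding g_def by (rule measurable_compose[OF dm h(1)])
  show "x \<in> Ord_INMR T I"
    unfolding Ord_INMR_def mem_Collect_eq
    apply (rule exI[of _ R], rule exI[of _ g], rule exI[of _ \<gamma>])
    unfolding eq x using h gm b1 by (simp add: \<gamma>_def)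
qed

theorem theorem1:
  fixes T :: "'s::finite \<Rightarrow> 'a::finite \<Rightarrow> 's pmf" and I :: "'s pmf"
  shows "Ord_INMR T I = Ord_IMORL T I \<and> Ord_IMORL T I = Ord_FTR T I"
  using inmr_imorl[of T I] imorl_ftr[of T I] ftr_inmr[of T I] by blast

end
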